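(* There exists a distributionally robust constrained MDP (finite $\mathcal{S}$, $\mathcal{A}$, discount $\gamma\in[0,1)$, $(s,a)$-rectangular uncertainty set $\mathcal{P}$, reward $r$, and a single constraint reward $g$) for which there is no consistency operator that, for every $\lambda_t\ge0$, simultaneously satisfies: (i) linearity; and (ii) $\gamma$-contraction to the target, i.e. for every policy $\pi\in\Pi$, $\mathcal{T}^\pi$ is a $\gamma$-contraction in $\|\cdot\|_\infty$ whose unique fixed point is $V^\pi_r - \lambda_t V^\pi_g$. (The operator may depend on $\lambda_t$.)
   Context: A distributionally robust constrained MDP consists of finite sets $\mathcal{S},\mathcal{A}$, $\gamma\in[0,1)$, an $(s,a)$-rectangular uncertainty set $\mathcal{P}=\otimes_{(s,a)}\mathcal{P}_{s,a}$ with $\mathcal{P}_{s,a}\subseteq\Delta(\mathcal{S})$, reward $r:\mathcal{S}\times\mathcal{A}\to\mathbb{R}_{\ge0}$ and constraint reward $g:\mathcal{S}\times\mathcal{A}\to\mathbb{R}_{\ge0}$. $\Pi=\Delta(\mathcal{A})^{\mathcal{S}}$ is the set of stationary stochastic policies (including deterministic ones); $\pi[s,\cdot]\in\Delta(\mathcal{A})$. For a reward $u$, the robust value function is $V^\pi_u(s) = \min_{\mathcal{K}\in\otimes_{t\ge0}\mathcal{P}}\mathbb{E}_{\mathcal{K}}[\sum_{t\ge0}\gamma^t u(s_t,a_t)\mid s_0=s,\pi]$, the worst case over sequences of transition kernels from $\mathcal{P}$ (one per time step) with $a_t\sim\pi[s_t,\cdot]$. A consistency operator is a family of maps $\mathcal{T}^\pi:\mathbb{R}^{\mathcal{S}}\to\mathbb{R}^{\mathcal{S}}$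 indexed by $\pi\in\Pi$. It is linear if there is $f:\mathbb{R}^{\mathcal{S}}\to\mathbb{R}^{\mathcal{S}\times\mathcal{A}}$, independent of $\pi$, with $[\mathcal{T}^\pi v](s) = \langle\pi[s,\cdot], f(v)[s,\cdot]\rangle$ for all $\pi, v, s$. *)

theory Defs
  imports Complex_Main
begin

(* States and actions are encoded as natural numbers, with explicit finite
   carriers S and A. Functions on S (resp. S x A) are functions on nat whose
   values outside the carrier are irrelevant. *)

definition distr :: "nat set \<Rightarrow> (nat \<Rightarrow> real) \<Rightarrow> bool" where
  "distr X p \<longleftrightarrow> (\<forall>x\<in>X. p x \<ge> 0) \<and> (\<Sum>x\<in>X. p x) = 1"

definition is_policy :: "nat set \<Rightarrow> nat set \<Rightarrow> (nat \<Rightarrow> nat \<Rightarrow> real) \<Rightarrow> bool" where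
  "is_policy S A \<pi> \<longleftrightarrow> (\<forall>s\<in>S. distr A (\<pi> s))"

primrec occ :: "nat set \<Rightarrow> nat set \<Rightarrow> (nat \<Rightarrow> nat \<Rightarrow> nat \<Rightarrow> nat \<Rightarrow> real)
    \<Rightarrow> (nat \<Rightarrow> nat \<Rightarrow> real) \<Rightarrow> nat \<Rightarrow> nat \<Rightarrow> nat \<Rightarrow> real" where
  "occ S A K \<pi> s0 0 = (\<lambda>s. if s = s0 then 1 else 0)"
| "occ S A K \<pi> s0 (Suc t) =
     (\<lambda>s'. \<Sum>s\<in>S. occ S A K \<pi> s0 t s * (\<Sum>a\<in>A. \<pi> s a * K t s a s'))"

definition disc_return :: "nat set \<Rightarrow> nat set \<Rightarrow> real \<Rightarrow> (nat \<Rightarrow> nat \<Rightarrow> nat \<Rightarrow> nat \<Rightarrow> real)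
    \<Rightarrow> (nat \<Rightarrow> nat \<Rightarrow> real) \<Rightarrow> (nat \<Rightarrow> nat \<Rightarrow> real) \<Rightarrow> nat \<Rightarrow> real" where
  "disc_return S A \<gamma> K \<pi> u s0 =
     (\<Sum>t. \<gamma> ^ t * (\<Sum>s\<in>S. occ S A K \<pi> s0 t s * (\<Sum>a\<in>A. \<pi> s a * u s a)))"

definition adm_kernels :: "nat set \<Rightarrow> nat set \<Rightarrow> (nat \<Rightarrow> nat \<Rightarrow> (nat \<Rightarrow> real) set)
    \<Rightarrow> (nat \<Rightarrow> nat \<Rightarrow> nat \<Rightarrow> nat \<Rightarrow> real) set" where
  "adm_kernels S A P = {K. \<forall>t. \<forall>s\<in>S. \<forall>a\<in>A. K t s a \<in> P s a}"

definition robust_value :: "nat set \<Rightarrow> nat set \<Rightarrow> real \<Rightarrow> (nat \<Rightarrow> nat \<Rightarrow> (nat \<Rightarrow> real) set)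
    \<Rightarrow> (nat \<Rightarrow> nat \<Rightarrow> real) \<Rightarrow> (nat \<Rightarrow> nat \<Rightarrow> real) \<Rightarrow> nat \<Rightarrow> real" where
  "robust_value S A \<gamma> P \<pi> u s0 =
     (INF K \<in> adm_kernels S A P. disc_return S A \<gamma> K \<pi> u s0)"

definition supnorm :: "nat set \<Rightarrow> (nat \<Rightarrow> real) \<Rightarrow> real" where
  "supnorm S v = Max ((\<lambda>s. \<bar>v s\<bar>) ` S)"

definition linear_consistency :: "nat set \<Rightarrow> nat set
    \<Rightarrow> ((nat \<Rightarrow> nat \<Rightarrow> real) \<Rightarrow> (nat \<Rightarrow> real) \<Rightarrow> (nat \<Rightarrow> real)) \<Rightarrow> bool" where
  "linear_consistency S A T \<longleftrightarrow>
     (\<exists>f :: (nat \<Rightarrow> real) \<Rightarrow> nat \<Rightarrow> nat \<Rightarrow> real.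
        \<forall>\<pi> v s. is_policy S A \<pi> \<longrightarrow> s \<in> S \<longrightarrow> T \<pi> v s = (\<Sum>a\<in>A. \<pi> s a * f v s a))"

definition contraction_to :: "nat set \<Rightarrow> nat set \<Rightarrow> real
    \<Rightarrow> ((nat \<Rightarrow> nat \<Rightarrow> real) \<Rightarrow> (nat \<Rightarrow> real) \<Rightarrow> (nat \<Rightarrow> real))
    \<Rightarrow> ((nat \<Rightarrow> nat \<Rightarrow> real) \<Rightarrow> nat \<Rightarrow> real) \<Rightarrow> bool" where
  "contraction_to S A \<gamma> T V \<longleftrightarrow>
     (\<forall>\<pi>. is_policy S A \<pi> \<longrightarrow>
        (\<forall>v w. supnorm S (\<lambda>s. T \<pi> v s - T \<pi> w s) \<le> \<gamma> * supnorm S (\<lambda>s. v s - w s)) \<and>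
        (\<forall>s\<in>S. T \<pi> (V \<pi>) s = V \<pi> s) \<and>
        (\<forall>v. (\<forall>s\<in>S. T \<pi> v s = v s) \<longrightarrow> (\<forall>s\<in>S. v s = V \<pi> s)))"

end

theory Submission
  imports Defs
begin

definition SS :: "nat set" where "SS = {0,1,2,3}"
definition AA :: "nat set" where "AA = {0,1}"
definition dl :: "nat \<Rightarrow> nat \<Rightarrow> real" where "dl k = (\<lambda>x. if x = k then 1 else 0)"
definition PP :: "nat \<Rightarrow> nat \<Rightarrow> (nat \<Rightarrow> real) set" where
  "PP s a = (if s = 0 then {dl 1, dl 2} else {dl 3})"
definition rr :: "nat \<Rightarrow> nat \<Rightarrow> real" where
  "rr s a = (if s = 1 then (if a = 0 then 1 else 0) else if s = 2 then (if a = 0 then 1 else 2) else 0)"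
definition gg :: "nat \<Rightarrow> nat \<Rightarrow> real" where
  "gg s a = (if s = 1 then (if a = 0 then 1 else 0) else if s = 2 then (if a = 0 then 0 else 1) else 0)"
definition wv :: "(nat \<Rightarrow> nat \<Rightarrow> real) \<Rightarrow> (nat \<Rightarrow> nat \<Rightarrow> real) \<Rightarrow> nat \<Rightarrow> real" where
  "wv \<pi> u s = (\<Sum>a\<in>AA. \<pi> s a * u s a)"

lemma adm_K: "K \<in> adm_kernels SS AA PP \<Longrightarrow> s \<in> SS \<Longrightarrow> a \<in> AA \<Longrightarrow> K t s a \<in> PP s a"
  by (auto simp: adm_kernels_def)

lemma PP_0: "p \<in> PP s a \<Longrightarrow> p 0 = 0"
  by (auto simp: PP_def dl_def split: if_splits)

lemma PP_ne0: "s \<noteq> 0 \<Longrightarrow> p \<in> PP s a \<Longrightarrow> p = dl 3"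
  by (auto simp: PP_def)

lemma occ_out:
  assumes "s0 \<notin> SS"
  shows "\<forall>s\<in>SS. occ SS AA K \<pi> s0 t s = 0"
proof (induction t)
  case 0
  then show ?case using assms by auto
next
  case (Suc t)
  then show ?case by simp
qed

lemma occ_Suc_0:
  assumes "K \<in> adm_kernels SS AA PP"
  shows "occ SS AA K \<pi> s0 (Suc t) 0 = 0"
proof -
  have "\<forall>s\<in>SS. \<forall>a\<in>AA. K t s a 0 = 0"
    using adm_K[OF assms] PP_0 by blast
  then show ?thesis by (simp only: occ.simps(2)) (simp add: sum.neutral)
qed

lemma occ_SS12:
  assumes "K \<in> adm_kernels SS AA PP" and "s = 1 \<or> s = 2"
  shows "occ SS AA K \<pi> s0 (Suc (Suc t)) s = 0"
proof -
  have "\<forall>s'\<in>SS. occ SS AA K \<pi> s0 (Suc t) s' * (\<Sum>a\<in>AA. \<pi> s' a * K (Suc t) s' a s) = 0"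
  proof
    fix s' assume s': "s' \<in> SS"
    show "occ SS AA K \<pi> s0 (Suc t) s' * (\<Sum>a\<in>AA. \<pi> s' a * K (Suc t) s' a s) = 0"
    proof (cases "s' = 0")
      case True then show ?thesis using occ_Suc_0[OF assms(1)] by simp
    next
      case False
      have "\<forall>a\<in>AA. K (Suc t) s' a = dl 3"
        using adm_K[OF assms(1) s'] PP_ne0 False by blast
      then have "\<forall>a\<in>AA. K (Suc t) s' a s = 0"
        using assms(2) by (auto simp: dl_def)
      then show ?thesis by simp
    qed
  qed
  then show ?thesis by (simp only: occ.simps(2)[of _ _ _ _ _ "Suc t"]) (rule sum.neutral)
qed

lemma disc_two:
  assumes "K \<in> adm_kernels SS AA PP" and "\<And>a. u 0 a = 0" and "\<And>a. u 3 a = 0"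
  shows "disc_return SS AA \<gamma> K \<pi> u s0 =
     (\<Sum>t<2. \<gamma> ^ t * (\<Sum>s\<in>SS. occ SS AA K \<pi> s0 t s * (\<Sum>a\<in>AA. \<pi> s a * u s a)))"
  unfolding disc_return_def
proof (rule suminf_finite)
  fix t assume "t \<notin> {..<(2::nat)}"
  then have t: "t = Suc (Suc (t - 2))" by simp
  have "\<forall>s\<in>SS. occ SS AA K \<pi> s0 t s * (\<Sum>a\<in>AA. \<pi> s a * u s a) = 0"
  proof
    fix s assume "s \<in> SS"
    then consider "s = 0" | "s = 1 \<or> s = 2" | "s = 3" by (auto simp: SS_def)
    then show "occ SS AA K \<pi> s0 t s * (\<Sum>a\<in>AA. \<pi> s a * u s a) = 0"
    proof cases
      case 1 then show ?thesis using t occ_Suc_0[OF assms(1), of \<pi> s0 "Suc (t - 2)"] by (metis mult_zero_left)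
    next
      case 2 then show ?thesis using t occ_SS12[OF assms(1) 2, of \<pi> s0 "t - 2"] by (metis mult_zero_left)
    next
      case 3 then show ?thesis using assms(3) by simp
    qed
  qed
  then show "\<gamma> ^ t * (\<Sum>s\<in>SS. occ SS AA K \<pi> s0 t s * (\<Sum>a\<in>AA. \<pi> s a * u s a)) = 0"
    by (metis (no_types, lifting) sum.neutral mult_zero_right)
qed simp

lemma delta_sum: "s0 \<in> X \<Longrightarrow> finite X \<Longrightarrow> (\<Sum>x\<in>X. (if x = s0 then 1 else 0) * (F x::real)) = F s0"
  by (simp add: if_distrib[of "\<lambda>c. c * F _"] sum.delta' cong: if_cong)

lemma finSS: "finite SS" by (simp add: SS_def)

lemma occ1: "s0 \<in> SS \<Longrightarrow> occ SS AA K \<pi> s0 (Suc 0) s = (\<Sum>a\<in>AA. \<pi> s0 a * K 0 s0 a s)"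
  by (simp add: delta_sum finSS)

lemma occ0: "s0 \<in> SS \<Longrightarrow> (\<Sum>s\<in>SS. occ SS AA K \<pi> s0 0 s * F s) = (F s0::real)"
  by (simp add: delta_sum finSS)

lemma disc_in:
  assumes "K \<in> adm_kernels SS AA PP" and "\<And>a. u 0 a = 0" and "\<And>a. u 3 a = 0"
    and "is_policy SS AA \<pi>" and "s0 \<in> SS" and "s0 \<noteq> 0"
  shows "disc_return SS AA \<gamma> K \<pi> u s0 = wv \<pi> u s0"
proof -
  have K3: "\<forall>a\<in>AA. K 0 s0 a = dl 3" using adm_K[OF assms(1) assms(5)] PP_ne0 assms(6) by blast
  have ps: "(\<Sum>a\<in>AA. \<pi> s0 a) = 1" using assms(4,5) by (simp add: is_policy_def distr_def)
  have o1: "occ SS AA K \<pi> s0 (Suc 0) s = dl 3 s" for s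
  proof -
    have "occ SS AA K \<pi> s0 (Suc 0) s = (\<Sum>a\<in>AA. \<pi> s0 a * dl 3 s)"
      using occ1[OF assms(5)] K3 by simp
    also have "\<dots> = dl 3 s" using ps by (simp add: sum_distrib_right[symmetric])
    finally show ?thesis .
  qed
  have w3: "wv \<pi> u 3 = 0" using assms(3) by (simp add: wv_def)
  have "(\<Sum>s\<in>SS. occ SS AA K \<pi> s0 (Suc 0) s * wv \<pi> u s) = 0"
    unfolding o1 dl_def using w3 by (simp add: SS_def)
  then show ?thesis
    unfolding disc_two[OF assms(1-3)] using occ0[OF assms(5)]
    by (simp add: numeral_2_eq_2 wv_def)
qed

lemma disc_0:
  assumes "K \<in> adm_kernels SS AA PP" and "\<And>a. u 0 a = 0" and "\<And>a. u 3 a = 0"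
    and "\<pi> 0 = dl 0" and "K 0 0 0 = dl k" and "k \<in> SS"
  shows "disc_return SS AA \<gamma> K \<pi> u 0 = \<gamma> * wv \<pi> u k"
proof -
  have o1: "occ SS AA K \<pi> 0 (Suc 0) s = dl k s" for s
    using occ1[of 0] assms(4,5) by (simp add: SS_def AA_def dl_def)
  have "(\<Sum>s\<in>SS. occ SS AA K \<pi> 0 (Suc 0) s * wv \<pi> u s) = wv \<pi> u k"
    unfolding o1 dl_def using delta_sum[OF assms(6) finSS] by simp
  moreover have "wv \<pi> u 0 = 0" using assms(2) by (simp add: wv_def)
  moreover have "(0::nat) \<in> SS" by (simp add: SS_def)
  ultimately show ?thesis
    unfolding disc_two[OF assms(1-3)] wv_def[symmetric]
    by (simp only: numeral_2_eq_2 sum.lessThan_Suc lessThan_0 sum.empty occ0 power_0 power_one_right) simp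
qed

lemma disc_out:
  assumes "s0 \<notin> SS"
  shows "disc_return SS AA \<gamma> K \<pi> u s0 = 0"
  unfolding disc_return_def using occ_out[OF assms] by simp

definition Kk :: "nat \<Rightarrow> nat \<Rightarrow> nat \<Rightarrow> nat \<Rightarrow> nat \<Rightarrow> real" where
  "Kk k = (\<lambda>t s a. if s = 0 then dl k else dl 3)"

lemma Kk_adm: "k = 1 \<or> k = 2 \<Longrightarrow> Kk k \<in> adm_kernels SS AA PP"
  by (auto simp: adm_kernels_def Kk_def PP_def)

lemma Inf2: "Inf {a::real, b} = min a b"
  by (simp add: cInf_insert inf_min)

lemma rv_val:
  assumes "\<And>a. u 0 a = 0" and "\<And>a. u 3 a = 0"
    and "is_policy SS AA \<pi>" and "\<pi> 0 = dl 0"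
  shows "robust_value SS AA \<gamma> PP \<pi> u s0 =
    (if s0 = 0 then min (\<gamma> * wv \<pi> u 1) (\<gamma> * wv \<pi> u 2) else if s0 \<in> SS then wv \<pi> u s0 else 0)"
proof -
  have ne: "adm_kernels SS AA PP \<noteq> {}" using Kk_adm by blast
  show ?thesis
  proof (cases "s0 = 0")
    case True
    have "(\<lambda>K. disc_return SS AA \<gamma> K \<pi> u 0) ` adm_kernels SS AA PP = {\<gamma> * wv \<pi> u 1, \<gamma> * wv \<pi> u 2}"
    proof
      show "(\<lambda>K. disc_return SS AA \<gamma> K \<pi> u 0) ` adm_kernels SS AA PP \<subseteq> {\<gamma> * wv \<pi> u 1, \<gamma> * wv \<pi> u 2}"
      proof
        fix x assume "x \<in> (\<lambda>K. disc_return SS AA \<gamma> K \<pi> u 0) ` adm_kernels SS AA PP"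
        then obtain K where K: "K \<in> adm_kernels SS AA PP" and x: "x = disc_return SS AA \<gamma> K \<pi> u 0" by blast
        have "K 0 0 0 \<in> PP 0 0" using adm_K[OF K] by (simp add: SS_def AA_def)
        then have "K 0 0 0 = dl 1 \<or> K 0 0 0 = dl 2" by (simp add: PP_def)
        then show "x \<in> {\<gamma> * wv \<pi> u 1, \<gamma> * wv \<pi> u 2}"
          using disc_0[where K=K and u=u and \<pi>=\<pi> and k=1 and \<gamma>=\<gamma>, OF K assms(1,2,4)]
            disc_0[where K=K and u=u and \<pi>=\<pi> and k=2 and \<gamma>=\<gamma>, OF K assms(1,2,4)] x
          by (auto simp: SS_def)
      qed
    next
      have kk: "Kk k 0 0 0 = dl k" for k by (simp add: Kk_def)
      have a1: "Kk 1 \<in> adm_kernels SS AA PP" and a2: "Kk 2 \<in> adm_kernels SS AA PP" using Kk_adm by auto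
      have "\<gamma> * wv \<pi> u 1 = disc_return SS AA \<gamma> (Kk 1) \<pi> u 0"
        using disc_0[where K="Kk 1" and u=u and \<pi>=\<pi> and k=1 and \<gamma>=\<gamma>, OF a1 assms(1,2,4) kk] by (simp add: SS_def)
      moreover have "\<gamma> * wv \<pi> u 2 = disc_return SS AA \<gamma> (Kk 2) \<pi> u 0"
        using disc_0[where K="Kk 2" and u=u and \<pi>=\<pi> and k=2 and \<gamma>=\<gamma>, OF a2 assms(1,2,4) kk] by (simp add: SS_def)
      ultimately show "{\<gamma> * wv \<pi> u 1, \<gamma> * wv \<pi> u 2} \<subseteq> (\<lambda>K. disc_return SS AA \<gamma> K \<pi> u 0) ` adm_kernels SS AA PP"
        using a1 a2 by blast
    qed
    then show ?thesis using True by (simp add: robust_value_def Inf2)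
  next
    case False
    have "robust_value SS AA \<gamma> PP \<pi> u s0 = (INF K\<in>adm_kernels SS AA PP. (if s0 \<in> SS then wv \<pi> u s0 else 0))"
      unfolding robust_value_def
      using disc_in[OF _ assms(1,2,3) _ False] disc_out by (intro INF_cong) auto
    then show ?thesis using False ne by simp
  qed
qed

theorem theorem2:
  shows "\<exists>(S::nat set) (A::nat set) (\<gamma>::real) (P :: nat \<Rightarrow> nat \<Rightarrow> (nat \<Rightarrow> real) set)
            (r :: nat \<Rightarrow> nat \<Rightarrow> real) (g :: nat \<Rightarrow> nat \<Rightarrow> real).
     finite S \<and> S \<noteq> {} \<and> finite A \<and> A \<noteq> {} \<and> 0 \<le> \<gamma> \<and> \<gamma> < 1 \<and>
     (\<forall>s\<in>S. \<forall>a\<in>A. P s a \<noteq> {} \<and> (\<forall>p\<in>P s a. distr S p)) \<and>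
     (\<forall>s a. 0 \<le> r s a) \<and> (\<forall>s a. 0 \<le> g s a) \<and>
     \<not> (\<forall>lam::real. 0 \<le> lam \<longrightarrow>
          (\<exists>T. linear_consistency S A T \<and>
               contraction_to S A \<gamma> T
                 (\<lambda>\<pi> s. robust_value S A \<gamma> P \<pi> r s - lam * robust_value S A \<gamma> P \<pi> g s)))"
  proof -
  let ?g = "1/2::real"
  define p1 :: "nat \<Rightarrow> nat \<Rightarrow> real" where "p1 = (\<lambda>s. if s = 2 then dl 1 else dl 0)"
  define p2 :: "nat \<Rightarrow> nat \<Rightarrow> real" where "p2 = (\<lambda>s. if s = 1 then dl 1 else dl 0)"
  define p3 :: "nat \<Rightarrow> nat \<Rightarrow> real" where "p3 = (\<lambda>s. dl 0)"
  have dd: "distr AA (dl k)" if "k \<in> AA" for k using that by (auto simp: distr_def AA_def dl_def)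
  have pol1: "is_policy SS AA p1" and pol2: "is_policy SS AA p2" and pol3: "is_policy SS AA p3"
    using dd by (auto simp: is_policy_def p1_def p2_def p3_def AA_def)
  have p0: "p1 0 = dl 0" "p2 0 = dl 0" "p3 0 = dl 0" by (auto simp: p1_def p2_def p3_def)
  have r0: "\<And>a. rr 0 a = 0" and r3: "\<And>a. rr 3 a = 0" by (auto simp: rr_def)
  have g0: "\<And>a. gg 0 a = 0" and g3: "\<And>a. gg 3 a = 0" by (auto simp: gg_def)
  define V where "V = (\<lambda>\<pi> s. robust_value SS AA ?g PP \<pi> rr s - 1 * robust_value SS AA ?g PP \<pi> gg s)"
  have w1: "wv p1 rr 1 = 1" "wv p1 rr 2 = 2" "wv p1 gg 1 = 1" "wv p1 gg 2 = 1"
    by (auto simp: wv_def AA_def p1_def dl_def rr_def gg_def)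
  have w2: "wv p2 rr 1 = 0" "wv p2 rr 2 = 1" "wv p2 gg 1 = 0" "wv p2 gg 2 = 0"
    by (auto simp: wv_def AA_def p2_def dl_def rr_def gg_def)
  have w3: "wv p3 rr 1 = 1" "wv p3 rr 2 = 1" "wv p3 gg 1 = 1" "wv p3 gg 2 = 0"
    by (auto simp: wv_def AA_def p3_def dl_def rr_def gg_def)
  have wo: "wv p rr 3 = 0" "wv p gg 3 = 0" for p by (auto simp: wv_def rr_def gg_def)
  have V1: "V p1 s = (if s = 2 then 1 else 0)" for s
    unfolding V_def rv_val[OF r0 r3 pol1 p0(1)] rv_val[OF g0 g3 pol1 p0(1)]
    using w1 wo by (auto simp: SS_def)
  have V2: "V p2 s = (if s = 2 then 1 else 0)" for s
    unfolding V_def rv_val[OF r0 r3 pol2 p0(2)] rv_val[OF g0 g3 pol2 p0(2)]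
    using w2 wo by (auto simp: SS_def)
  have V3: "V p3 0 = 1/2"
    unfolding V_def rv_val[OF r0 r3 pol3 p0(3)] rv_val[OF g0 g3 pol3 p0(3)] w3
    by simp
  have V12: "V p2 = V p1" using V1 V2 by auto
  have "\<not> (\<exists>T. linear_consistency SS AA T \<and> contraction_to SS AA ?g T V)"
  proof
    assume "\<exists>T. linear_consistency SS AA T \<and> contraction_to SS AA ?g T V"
    then obtain T where lc: "linear_consistency SS AA T" and c: "contraction_to SS AA ?g T V" by blast
    from lc obtain f where f: "\<And>\<pi> v s. is_policy SS AA \<pi> \<Longrightarrow> s \<in> SS \<Longrightarrow> T \<pi> v s = (\<Sum>a\<in>AA. \<pi> s a * f v s a)"
      unfolding linear_consistency_def by blast
    have cc: "(\<forall>s\<in>SS. T \<pi> (V \<pi>) s = V \<pi> s) \<and> (\<forall>v. (\<forall>s\<in>SS. T \<pi> v s = v s) \<longrightarrow> (\<forall>s\<in>SS. v s = V \<pi> s))"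
      if "is_policy SS AA \<pi>" for \<pi>
      using c that unfolding contraction_to_def by simp
    let ?v = "V p1"
    have fx1: "\<forall>s\<in>SS. T p1 ?v s = ?v s" using cc[OF pol1] by (rule conjunct1)
    have "\<forall>s\<in>SS. T p2 (V p2) s = V p2 s" using cc[OF pol2] by (rule conjunct1)
    then have fx2: "\<forall>s\<in>SS. T p2 ?v s = ?v s" unfolding V12 .
    have "\<forall>s\<in>SS. T p3 ?v s = ?v s"
    proof
      fix s assume s: "s \<in> SS"
      show "T p3 ?v s = ?v s"
      proof (cases "s = 1")
        case True
        have "p3 s = p1 s" using True by (simp add: p1_def p3_def)
        have "T p3 ?v s = (\<Sum>a\<in>AA. p3 s a * f ?v s a)" using f[OF pol3 s] .
        also have "\<dots> = (\<Sum>a\<in>AA. p1 s a * f ?v s a)" using \<open>p3 s = p1 s\<close> by simp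
        also have "\<dots> = T p1 ?v s" using f[OF pol1 s] by simp
        also have "\<dots> = ?v s" using fx1 s by blast
        finally show ?thesis .
      next
        case False
        have "p3 s = p2 s" using False by (simp add: p2_def p3_def)
        have "T p3 ?v s = (\<Sum>a\<in>AA. p3 s a * f ?v s a)" using f[OF pol3 s] .
        also have "\<dots> = (\<Sum>a\<in>AA. p2 s a * f ?v s a)" using \<open>p3 s = p2 s\<close> by simp
        also have "\<dots> = T p2 ?v s" using f[OF pol2 s] by simp
        also have "\<dots> = ?v s" using fx2 s by blast
        finally show ?thesis .
      qed
    qed
    then have "\<forall>s\<in>SS. ?v s = V p3 s" using conjunct2[OF cc[OF pol3]] by blast
    then have "?v 0 = V p3 0" by (simp add: SS_def)
    then show False using V1[of 0] V3 by simp
  qed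
  moreover have "\<forall>s\<in>SS. \<forall>a\<in>AA. PP s a \<noteq> {} \<and> (\<forall>p\<in>PP s a. distr SS p)"
    by (auto simp: PP_def distr_def SS_def dl_def)
  moreover have "\<forall>s a. 0 \<le> rr s a" "\<forall>s a. 0 \<le> gg s a" by (auto simp: rr_def gg_def)
  moreover have "finite SS" "SS \<noteq> {}" "finite AA" "AA \<noteq> {}" by (auto simp: SS_def AA_def)
  moreover have "(0::real) \<le> ?g" "?g < 1" by auto
  moreover have "\<not> (\<forall>lam::real. 0 \<le> lam \<longrightarrow>
          (\<exists>T. linear_consistency SS AA T \<and>
               contraction_to SS AA ?g T
                 (\<lambda>\<pi> s. robust_value SS AA ?g PP \<pi> rr s - lam * robust_value SS AA ?g PP \<pi> gg s)))"
  proof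
    assume H: "\<forall>lam::real. 0 \<le> lam \<longrightarrow>
          (\<exists>T. linear_consistency SS AA T \<and>
               contraction_to SS AA ?g T
                 (\<lambda>\<pi> s. robust_value SS AA ?g PP \<pi> rr s - lam * robust_value SS AA ?g PP \<pi> gg s))"
    have "\<exists>T. linear_consistency SS AA T \<and> contraction_to SS AA ?g T V"
      using H[rule_format, of 1] unfolding V_def by simp
    then show False using calculation(1) by blast
  qed
  ultimately show ?thesis
    apply (rule_tac x=SS in exI, rule_tac x=AA in exI, rule_tac x="?g" in exI)
    apply (rule_tac x=PP in exI, rule_tac x=rr in exI, rule_tac x=gg in exI)
    by (intro conjI)
qed

end
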